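(* In the BTS-RED-Known setting, let $p=\frac{1}{4e\sqrt\pi}$ and let $S_t=\{\boldsymbol x\in\mathcal X:\Delta(\boldsymbol x)>c_t\sigma_{t-1}(\boldsymbol x)\}$ be the set of saturated points, where $\Delta(\boldsymbol x)=f(\boldsymbol x^* )-f(\boldsymbol x)$. For every $t\ge1$ and every history $\mathcal F_{t-1}$ on which $E^f(t)$ holds, $$\mathbb P\big(\boldsymbol x^{(b)}_t\in\mathcal X\setminus S_t\mid\mathcal F_{t-1}\big)\ge p-1/t^2\qquad\text{for all }b\in[b_t].$$
   Context: Setting (BTS-RED-Known). $\mathcal X$ is a finite set; $k$ is a squared-exponential kernel on $\mathcal X$ (so $k(\boldsymbol x,\boldsymbol x)=1$); the unknown objective $f:\mathcal X\to\mathbb R$ lies in the RKHS $\mathcal H_k$ with $\|f\|_{\mathcal H_k}\le B$ for a known $B>0$. A known noise variance function $\sigma^2:\mathcal X\to(0,\infty)$ has maximum value $\sigma^2_{\max}$. Querying $\boldsymbol x$ once returns $f(\boldsymbol x)+\epsilon$ with $\epsilon\sim\mathcal N(0,\sigma^2(\boldsymbol x))$, independently across queries. Fix a horizon $T$, a total budget $\mathbb B\in\mathbb N$, an effective noise variance $R^2>0$, $\delta\in(0,1)$, and $\lambda=1+2/T$. GP posterior: given data pairs $(\boldsymbol x_i,y_i)_{i=1}^m$, $\mu(\boldsymbol x)=\boldsymbol k(\boldsymbol x)^\top(\boldsymbol K+\lambda I)^{-1}\boldsymbol y$ and $s^2(\boldsymbol x,\boldsymbol x')=k(\boldsymbol x,\boldsymbol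 x')-\boldsymbol k(\boldsymbol x)^\top(\boldsymbol K+\lambda I)^{-1}\boldsymbol k(\boldsymbol x')$, with $\boldsymbol k(\boldsymbol x)=(k(\boldsymbol x,\boldsymbol x_i))_i$, $\boldsymbol K=(k(\boldsymbol x_i,\boldsymbol x_j))_{ij}$, $\boldsymbol y=(y_i)_i$. $\mu_{t-1}$ and $\sigma^2_{t-1}(\cdot,\cdot)$ denote these quantities computed from all pairs collected in iterations $1,\dots,t-1$, and $\sigma_{t-1}(\boldsymbol x)=\sqrt{\sigma^2_{t-1}(\boldsymbol x,\boldsymbol x)}$. Algorithm: in iteration $t$, for $b=1,2,\dots$: draw $f^{(b)}_t$ (independently, given the past) from the Gaussian process with mean $\mu_{t-1}$ and covariance $\beta_t^2\sigma^2_{t-1}(\cdot,\cdot)$; set $\boldsymbol x^{(b)}_t\in\arg\max_{\boldsymbol x\in\mathcal X}f^{(b)}_t(\boldsymbol x)$ and $n^{(b)}_t=\lceil\sigma^2(\boldsymbol x^{(b)}_t)/R^2\rceil$; stop at the first $b$ with $\sum_{b'\le b}n^{(b')}_t\ge\mathbb B$ and set $b_t=b-1$. Each $\boldsymbol x^{(b)}_t$, $b\in[b_t]=\{1,\dots,b_t\}$, is queried $n^{(b)}_t$ times, the empirical mean $y^{(b)}_t$ of these replicates is recorded, and the pairs $(\boldsymbol x^{(b)}_t,y^{(b)}_t)_{b\in[b_t]}$ are added to the data. $\tau_{t-1}=\sum_{t'=1}^{t-1}b_{t'}$. $\mathcal F_{t-1}$ denotes the history of all observations up to and including iteration $t-1$.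 $\Gamma_m$ is the maximum information gain $\max_{|A|\le m}\tfrac12\log\det(I+\lambda^{-1}K_A)$. $\beta_t=B+R\sqrt{2(\Gamma_{\tau_{t-1}}+1+\log(2/\delta))}$, $c_t=\beta_t(1+\sqrt{2\log(\mathbb B|\mathcal X|t^2)})$. $\boldsymbol x^*\in\arg\max_{\mathcal X}f$. $E^f(t)$ is the event that $|\mu_{t-1}(\boldsymbol x)-f(\boldsymbol x)|\le\beta_t\sigma_{t-1}(\boldsymbol x)$ for all $\boldsymbol x\in\mathcal X$. *)

theory Defs
  imports "HOL-Probability.Probability" "Jordan_Normal_Form.Gauss_Jordan_Elimination"
    "Jordan_Normal_Form.Determinant"
begin

definition se_kernel :: "real \<Rightarrow> 'a::euclidean_space \<Rightarrow> 'a \<Rightarrow> real" where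
  "se_kernel l x x' = exp (- (norm (x - x'))\<^sup>2 / (2 * l\<^sup>2))"

(* RKHS of k on the finite set X: span of kernel sections, with norm
   ||sum_y a_y k(.,y)||^2 = sum_x sum_y a_x a_y k(x,y) *)
definition rkhs_norm_le :: "('a \<Rightarrow> 'a \<Rightarrow> real) \<Rightarrow> 'a set \<Rightarrow> ('a \<Rightarrow> real) \<Rightarrow> real \<Rightarrow> bool" where
  "rkhs_norm_le k X f B \<longleftrightarrow>
     (\<exists>a::'a \<Rightarrow> real. (\<forall>x\<in>X. f x = (\<Sum>y\<in>X. a y * k x y)) \<and>
        sqrt (\<Sum>x\<in>X. \<Sum>y\<in>X. a x * a y * k x y) \<le> B)"

definition gram :: "('a \<Rightarrow> 'a \<Rightarrow> real) \<Rightarrow> 'a list \<Rightarrow> real mat" where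
  "gram k xs = mat (length xs) (length xs) (\<lambda>(i,j). k (xs ! i) (xs ! j))"

definition reg_inv :: "('a \<Rightarrow> 'a \<Rightarrow> real) \<Rightarrow> real \<Rightarrow> 'a list \<Rightarrow> real mat" where
  "reg_inv k lam xs = the (mat_inverse (gram k xs + lam \<cdot>\<^sub>m 1\<^sub>m (length xs)))"

definition post_mean :: "('a \<Rightarrow> 'a \<Rightarrow> real) \<Rightarrow> real \<Rightarrow> ('a \<times> real) list \<Rightarrow> 'a \<Rightarrow> real" where
  "post_mean k lam D x =
     (let xs = map fst D; ys = map snd D; Ki = reg_inv k lam xs in
      \<Sum>i<length D. \<Sum>j<length D. k x (xs ! i) * Ki $$ (i,j) * ys ! j)"

definition post_cov :: "('a \<Rightarrow> 'a \<Rightarrow> real) \<Rightarrow> real \<Rightarrow> ('a \<times> real) list \<Rightarrow> 'a \<Rightarrow> 'a \<Rightarrow> real" where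
  "post_cov k lam D x x' =
     (let xs = map fst D; Ki = reg_inv k lam xs in
      k x x' - (\<Sum>i<length D. \<Sum>j<length D. k x (xs ! i) * Ki $$ (i,j) * k (xs ! j) x'))"

definition post_sd :: "('a \<Rightarrow> 'a \<Rightarrow> real) \<Rightarrow> real \<Rightarrow> ('a \<times> real) list \<Rightarrow> 'a \<Rightarrow> real" where
  "post_sd k lam D x = sqrt (post_cov k lam D x x)"

(* Maximum information gain Gamma_m = max_{|A| <= m} 1/2 log det(I + lambda^{-1} K_A),
   A ranging over finite sequences (multisets) of points of X *)
definition max_info_gain :: "('a \<Rightarrow> 'a \<Rightarrow> real) \<Rightarrow> real \<Rightarrow> 'a set \<Rightarrow> nat \<Rightarrow> real" where
  "max_info_gain k lam X m =
     Max {1/2 * ln (det (1\<^sub>m (length A) + (1/lam) \<cdot>\<^sub>m gram k A)) | A. set A \<subseteq> X \<and> length A \<le> m}"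

definition gauss_measure :: "real \<Rightarrow> real \<Rightarrow> real measure" where
  "gauss_measure m v = (if v = 0 then return borel m else density lborel (normal_density m (sqrt v)))"

(* M is the law of a Gaussian process on the finite set X with mean mu and covariance C:
   every linear combination of the values is normal with the corresponding mean/variance *)
definition is_gp_law :: "'a set \<Rightarrow> ('a \<Rightarrow> real) \<Rightarrow> ('a \<Rightarrow> 'a \<Rightarrow> real) \<Rightarrow> ('a \<Rightarrow> real) measure \<Rightarrow> bool" where
  "is_gp_law X mu C M \<longleftrightarrow>
     prob_space M \<and> sets M = sets (Pi\<^sub>M X (\<lambda>_. borel)) \<and>
     (\<forall>a::'a \<Rightarrow> real.
        distr M borel (\<lambda>g. \<Sum>x\<in>X. a x * g x) =
        gauss_measure (\<Sum>x\<in>X. a x * mu x) (\<Sum>x\<in>X. \<Sum>y\<in>X. a x * a y * C x y))"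

end

theory Submission
  imports Defs
begin

lemma tail_lower:
  fixes m sd :: real assumes sd: "sd > 0"
  shows "exp (-2) / sqrt (2*pi) \<le> measure (density lborel (normal_density m sd)) {m+sd..}"
proof -
  interpret P: prob_space "density lborel (normal_density m sd)" by (intro prob_space_normal_density sd)
  define K where "K = 1 / sqrt (2 * pi * sd\<^sup>2)"
  have K: "K = 1 / (sqrt (2*pi) * sd)" using sd by (simp add: K_def real_sqrt_mult)
  have pt: "ennreal (K * exp (-2)) * indicator {m+sd..m+2* sd} x \<le> ennreal (normal_density m sd x) * indicator {m+sd..} x" for x
  proof (cases "x \<in> {m+sd..m+2* sd}")
    case True
    then have "(x-m)\<^sup>2 \<le> (2* sd)\<^sup>2" using sd by (intro power_mono) auto
    then have "-2 \<le> -(x - m)\<^sup>2/ (2 * sd\<^sup>2)" using sd by (simp add: field_simps power2_eq_square)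
    then have "K * exp (-2) \<le> normal_density m sd x" unfolding normal_density_def K_def
      by (intro mult_left_mono) auto
    then show ?thesis using True by (auto simp: indicator_def)
  qed (auto simp: indicator_def)
  have "ennreal (K * exp (-2) * sd) = ennreal (K * exp (-2)) * emeasure lborel {m+sd..m+2 * sd}"
    using sd by (subst ennreal_mult) (auto simp: K_def)
  also have "\<dots> = (\<integral>\<^sup>+x. ennreal (K * exp (-2)) * indicator {m+sd..m+2 * sd} x \<partial>lborel)"
    by (simp add: nn_integral_cmult_indicator)
  also have "\<dots> \<le> (\<integral>\<^sup>+x. ennreal (normal_density m sd x) * indicator {m+sd..} x \<partial>lborel)"
    by (intro nn_integral_mono pt)
  also have "\<dots> = emeasure (density lborel (normal_density m sd)) {m+sd..}"
    by (subst emeasure_density) auto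
  also have "\<dots> = ennreal (measure (density lborel (normal_density m sd)) {m+sd..})"
    by (simp only: P.emeasure_eq_measure)
  finally have "K * exp (-2) * sd \<le> measure (density lborel (normal_density m sd)) {m+sd..}"
    by (metis ennreal_le_iff measure_nonneg)
  moreover have "K * exp (-2) * sd = exp (-2) / sqrt (2*pi)" using sd by (simp add: K)
  ultimately show ?thesis by simp
qed

lemma tail_upper:
  fixes m sd s :: real assumes sd: "sd > 0" and s: "s \<ge> 1"
  shows "measure (density lborel (normal_density m sd)) {m+s * sd..} \<le> exp (-(s\<^sup>2)/2)"
proof -
  interpret P: prob_space "density lborel (normal_density m sd)" by (intro prob_space_normal_density sd)
  define K where "K = 1 / sqrt (2 * pi * sd\<^sup>2)"
  have K: "K = 1 / (sqrt (2*pi) * sd)" using sd by (simp add: K_def real_sqrt_mult)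
  define E where "E x = exp (-(x - m)\<^sup>2/ (2 * sd\<^sup>2))" for x
  define g where "g x = (x-m)/(s * sd) * (K * E x)" for x
  define F where "F x = - (sd/s) * K * E x" for x
  let ?a = "m+s * sd"
  have nd: "normal_density m sd x = K * E x" for x unfolding normal_density_def K_def E_def by simp
  have pt: "ennreal (normal_density m sd x) * indicator {?a..} x \<le> ennreal (g x) * indicator {?a..} x" for x
  proof (cases "x \<ge> ?a")
    case True
    then have "1 \<le> (x-m)/(s * sd)" using sd s by (simp add: field_simps)
    moreover have "0 \<le> K * E x" unfolding K_def E_def by simp
    ultimately have "K * E x \<le> g x" unfolding g_def by (metis mult_le_cancel_right1 mult.commute not_le order_less_le_trans mult_le_0_iff order.trans) 
    then show ?thesis using True by (simp add: nd indicator_def ennreal_leI)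
  qed (simp add: indicator_def)
  have der: "DERIV F x :> g x" for x
    unfolding F_def g_def E_def using sd s
    by (auto intro!: derivative_eq_intros simp: field_simps power2_eq_square)
  have lim: "(F \<longlongrightarrow> 0) at_top"
    unfolding F_def E_def using sd by real_asymp
  have ss: "0 \<le> s * sd" using sd s by simp
  have gnn: "x \<ge> ?a \<Longrightarrow> 0 \<le> g x" for x
  proof -
    assume "x \<ge> ?a" then have "m \<le> x" using ss by linarith
    then show ?thesis using sd s unfolding g_def K_def E_def by (intro mult_nonneg_nonneg divide_nonneg_pos) auto
  qed
  have Fa: "F ?a \<le> 0" unfolding F_def K_def E_def using sd s by simp
  have "emeasure (density lborel (normal_density m sd)) {?a..} = (\<integral>\<^sup>+x. ennreal (normal_density m sd x) * indicator {?a..} x \<partial>lborel)"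
    by (subst emeasure_density) auto
  also have "\<dots> \<le> (\<integral>\<^sup>+x. ennreal (g x) * indicator {?a..} x \<partial>lborel)"
    by (intro nn_integral_mono pt)
  also have "\<dots> = ennreal (0 - F ?a)"
    by (rule nn_integral_FTC_atLeast[OF _ der gnn lim]) (simp add: g_def E_def)
  finally have "ennreal (measure (density lborel (normal_density m sd)) {?a..}) \<le> ennreal (- F ?a)"
    by (simp only: P.emeasure_eq_measure diff_0)
  then have "measure (density lborel (normal_density m sd)) {?a..} \<le> - F ?a"
    using Fa by (subst (asm) ennreal_le_iff) auto
  also have "- F ?a = exp (-(s\<^sup>2)/2) / (s * sqrt (2*pi))"
    using sd s by (simp add: F_def K E_def power_mult_distrib field_simps)
  also have "\<dots> \<le> exp (-(s\<^sup>2)/2)"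
  proof -
    have "1 \<le> sqrt (2*pi)" using pi_gt3 by simp
    then have h: "1 \<le> s * sqrt (2*pi)" using s mult_mono[of 1 s 1 "sqrt (2*pi)"] by simp
    have "exp (-(s\<^sup>2)/2) / (s * sqrt (2*pi)) \<le> exp (-(s\<^sup>2)/2) / 1"
      by (rule divide_left_mono) (use h in auto)
    then show ?thesis by simp
  qed
  finally show ?thesis .
qed


lemma delta_sum1:
  assumes "finite X" "x \<in> X"
  shows "(\<Sum>y\<in>X. (if y = x then 1 else 0) * (h y::real)) = h x"
proof -
  have "(\<Sum>y\<in>X. (if y = x then 1 else 0) * h y) = (\<Sum>y\<in>X. if y = x then h y else 0)"
    by (intro sum.cong) auto
  then show ?thesis using assms by simp
qed

lemma delta_sum2:
  assumes "finite X" "x \<in> X"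
  shows "(\<Sum>a\<in>X. \<Sum>b\<in>X. (if a = x then 1 else 0) * (if b = x then 1 else 0) * (h a b::real)) = h x x"
proof -
  have "(\<Sum>a\<in>X. \<Sum>b\<in>X. (if a = x then 1 else 0) * (if b = x then 1 else 0) * h a b)
      = (\<Sum>a\<in>X. (if a = x then 1 else 0) * (\<Sum>b\<in>X. (if b = x then 1 else 0) * h a b))"
    by (simp add: sum_distrib_left mult.assoc)
  also have "\<dots> = (\<Sum>a\<in>X. (if a = x then 1 else 0) * h a x)"
    using delta_sum1[OF assms] by simp
  also have "\<dots> = h x x" using delta_sum1[OF assms] by simp
  finally show ?thesis .
qed

lemma info_gain_nonneg:
  assumes "finite X"
  shows "0 \<le> max_info_gain k lam X m"
proof -
  let ?h = "\<lambda>A. 1/2 * ln (det (1\<^sub>m (length A) + (1/lam) \<cdot>\<^sub>m gram k A))"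
  have fin: "finite {?h A | A. set A \<subseteq> X \<and> length A \<le> m}"
    using finite_lists_length_le[OF assms, of m] by (rule finite_image_set)
  have mem: "?h [] \<in> {?h A | A. set A \<subseteq> X \<and> length A \<le> m}" by (intro CollectI exI[of _ "[]"]) simp
  have z: "?h [] = 0"
    by (subst det_dim_zero) (auto simp: gram_def)
  have "?h [] \<le> Max {?h A | A. set A \<subseteq> X \<and> length A \<le> m}" by (rule Max_ge[OF fin mem])
  then show ?thesis unfolding max_info_gain_def z .
qed

theorem mainTheorem5:
  fixes X :: "'a::euclidean_space set"
    and l B R \<delta> :: real
    and f :: "'a \<Rightarrow> real"
    and T Budget t :: nat
    and D :: "('a \<times> real) list"
    and M :: "('a \<Rightarrow> real) measure"
    and sel :: "('a \<Rightarrow> real) \<Rightarrow> 'a"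
    and k :: "'a \<Rightarrow> 'a \<Rightarrow> real" and lam \<beta> c p :: real
    and \<Delta> :: "'a \<Rightarrow> real" and S :: "'a set"
  assumes "k = se_kernel l"
    and "lam = 1 + 2 / real T"
    and "\<beta> = B + R * sqrt (2 * (max_info_gain k lam X (length D) + 1 + ln (2 / \<delta>)))"
    and "c = \<beta> * (1 + sqrt (2 * ln (real Budget * real (card X) * (real t)\<^sup>2)))"
    and "p = 1 / (4 * exp 1 * sqrt pi)"
    and "\<Delta> = (\<lambda>x. Max (f ` X) - f x)"
    and "S = {x \<in> X. \<Delta> x > c * post_sd k lam D x}"
    and "finite X" and "X \<noteq> {}" and "l > 0"
    and "B > 0" and "rkhs_norm_le k X f B"
    and "T \<ge> 1" and "Budget \<ge> 1" and "R > 0" and "0 < \<delta>" and "\<delta> < 1"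
    and "t \<ge> 1"
    and "set (map fst D) \<subseteq> X"
    and "\<forall>x\<in>X. \<bar>post_mean k lam D x - f x\<bar> \<le> \<beta> * post_sd k lam D x"
    and "is_gp_law X (post_mean k lam D) (\<lambda>x x'. \<beta>\<^sup>2 * post_cov k lam D x x') M"
    and "sel \<in> measurable M (count_space X)"
    and "\<forall>g\<in>space M. sel g \<in> X \<and> (\<forall>x\<in>X. g x \<le> g (sel g))"
  shows "measure M {g \<in> space M. sel g \<in> X - S} \<ge> p - 1 / (real t)\<^sup>2"
proof -
  note A = assms
  show ?thesis
  proof (cases "t \<le> 4")
    case True
    have "p \<le> 1/16"
    proof -
      have e: "5/2 \<le> exp (1::real)" using exp_lower_Taylor_quadratic[of 1] by simp
      have "sqrt 3 \<le> sqrt pi" using pi_gt3 by simp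
      moreover have "(17/10::real) \<le> sqrt 3" by (rule real_le_rsqrt) (simp add: power2_eq_square)
      ultimately have pi: "17/10 \<le> sqrt pi" by linarith
      have h: "5/2 * (17/10) \<le> exp 1 * sqrt pi" using mult_mono[OF e pi] by simp
      have "16 \<le> 4 * exp 1 * sqrt pi" using h by (simp only: mult.assoc)
      then show ?thesis unfolding A(5) by (intro divide_left_mono) auto
    qed
    moreover have "1/16 \<le> 1 / (real t)\<^sup>2"
    proof -
      have "(real t)\<^sup>2 \<le> 4\<^sup>2" using True by (intro power_mono) auto
      then show ?thesis using A(18) by (intro divide_left_mono) auto
    qed
    ultimately show ?thesis using measure_nonneg[of M] by (smt (verit))
  next
    case False
    then have t5: "t \<ge> 5" by simp
    let ?N = "real Budget * real (card X) * (real t)\<^sup>2"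
    let ?mu = "post_mean k lam D" and ?sg = "post_sd k lam D" and ?cv = "post_cov k lam D"
    define s where "s = sqrt (2 * ln ?N)"
    have cX: "card X \<ge> 1" using A(8,9) by (simp add: Suc_le_eq card_gt_0_iff)
    have N25: "25 \<le> ?N"
    proof -
      have "(25::real) \<le> (real t)\<^sup>2" using t5 power_mono[of 5 "real t" 2] by simp
      moreover have "1 \<le> real Budget * real (card X)" using A(14) cX
        by (metis mult_mono' of_nat_1 of_nat_le_iff mult_1_left zero_le_one)
      ultimately show ?thesis using mult_mono[of 1 "real Budget * real (card X)" 25 "(real t)\<^sup>2"] by simp
    qed
    have lnN: "1 \<le> ln ?N"
    proof -
      have "exp 1 \<le> ?N" using exp_le N25 by linarith
      then show ?thesis using N25 by (metis ln_exp ln_le_cancel_iff exp_gt_zero order_less_le_trans)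
    qed
    have s1: "1 \<le> s" unfolding s_def using lnN by simp
    have ss: "s\<^sup>2 = 2 * ln ?N" unfolding s_def using lnN by simp
    have gen: "0 < y \<Longrightarrow> exp (-(2 * ln y)/2) = 1/y" for y::real by (simp add: exp_minus exp_ln inverse_eq_divide)
    have expN: "exp (-(s\<^sup>2)/2) = 1 / ?N" unfolding ss by (rule gen) (use N25 in linarith)
    have G: "0 \<le> max_info_gain k lam X (length D)" by (rule info_gain_nonneg[OF A(8)])
    have bpos: "\<beta> > 0"
    proof -
      have "0 \<le> R * sqrt (2 * (max_info_gain k lam X (length D) + 1 + ln (2 / \<delta>)))"
        using G A(15,16,17) by (intro mult_nonneg_nonneg) auto
      then show ?thesis using A(3,11) by linarith
    qed
    have c_eq: "c = \<beta> * (1 + s)" unfolding A(4) s_def by simp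
    have sg_nn: "0 \<le> ?sg x" if "x \<in> X" for x
    proof -
      have "0 \<le> \<beta> * ?sg x" using A(20) that by (meson abs_ge_zero order.trans)
      then show ?thesis using bpos by (simp add: zero_le_mult_iff)
    qed
    have cv_nn: "0 \<le> ?cv x x" if "x \<in> X" for x
      using sg_nn[OF that] unfolding post_sd_def by simp
    define sd where "sd x = \<beta> * ?sg x" for x
    have sd_nn: "x \<in> X \<Longrightarrow> 0 \<le> sd x" for x using sg_nn bpos by (simp add: sd_def)
    have sqv: "sqrt (\<beta>\<^sup>2 * ?cv x x) = sd x" if "x \<in> X" for x
      using bpos cv_nn[OF that] by (simp add: sd_def post_sd_def real_sqrt_mult)
    interpret P: prob_space M using A(21) unfolding is_gp_law_def by blast
    have setsM: "sets M = sets (Pi\<^sub>M X (\<lambda>_. borel))" using A(21) unfolding is_gp_law_def by blast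
    have meas: "(\<lambda>g. g x) \<in> borel_measurable M" if "x \<in> X" for x
      using measurable_component_singleton[OF that, of "\<lambda>_. borel"] measurable_cong_sets[OF setsM refl] by blast
    have distr: "distr M borel (\<lambda>g. g x) = gauss_measure (?mu x) (\<beta>\<^sup>2 * ?cv x x)" if "x \<in> X" for x
    proof -
      have all: "\<forall>a::'a\<Rightarrow>real. distr M borel (\<lambda>g. \<Sum>x\<in>X. a x * g x) = gauss_measure (\<Sum>x\<in>X. a x * ?mu x) (\<Sum>x\<in>X. \<Sum>y\<in>X. a x * a y * (\<beta>\<^sup>2 * ?cv x y))"
        using A(21) unfolding is_gp_law_def by blast
      note spec[OF all, of "\<lambda>y. if y = x then 1 else 0"]
      then show ?thesis using that A(8) by (simp only: delta_sum1 delta_sum2)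
    qed
    define Pr where "Pr x a = measure M ((\<lambda>g. g x) -` {a..} \<inter> space M)" for x a
    have Pr_eq: "Pr x a = measure (gauss_measure (?mu x) (\<beta>\<^sup>2 * ?cv x x)) {a..}" if "x \<in> X" for x a
      unfolding Pr_def distr[OF that, symmetric] by (subst measure_distr[OF meas[OF that]]) auto
    have ev: "(\<lambda>g. g x) -` {a..} \<inter> space M \<in> P.events" if "x \<in> X" for x a
      using measurable_sets[OF meas[OF that]] by simp
    have "Max (f ` X) \<in> f ` X" using A(8,9) by (intro Max_in) auto
    then obtain xs where xs: "xs \<in> X" "f xs = Max (f ` X)" by auto
    let ?fs = "f xs"
    have low: "p \<le> Pr xs ?fs"
    proof (cases "sd xs = 0")
      case True
      then have v0: "\<beta>\<^sup>2 * ?cv xs xs = 0" using sqv[OF xs(1)] by simp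
      have "\<bar>?mu xs - f xs\<bar> \<le> \<beta> * ?sg xs" using A(20) xs(1) by blast
      then have "\<bar>?mu xs - f xs\<bar> \<le> 0" using True by (simp only: sd_def)
      then have "?fs \<le> ?mu xs" by simp
      then have "Pr xs ?fs = 1" using Pr_eq[OF xs(1), of ?fs] v0 by (simp add: gauss_measure_def measure_return)
      moreover have "p \<le> 1"
      proof -
        have "1 \<le> exp (1::real)" by simp
        moreover have "1 \<le> sqrt pi" using pi_gt3 by simp
        ultimately have "1 \<le> exp 1 * sqrt pi" using mult_mono[of 1 "exp 1" 1 "sqrt pi"] by simp
        then have "1 \<le> 4 * exp 1 * sqrt pi" by (simp only: mult.assoc)
        then show ?thesis unfolding A(5) by simp
      qed
      ultimately show ?thesis by simp
    next
      case False
      then have sdp: "sd xs > 0" using sd_nn[OF xs(1)] by simp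
      then have v: "\<beta>\<^sup>2 * ?cv xs xs \<noteq> 0" using sqv[OF xs(1)] by auto
      have "?fs \<le> ?mu xs + sd xs" using A(20) xs(1) by (auto simp: sd_def abs_le_iff)
      then have sub: "{?mu xs + sd xs..} \<subseteq> {?fs..}" by auto
      interpret Q: prob_space "density lborel (normal_density (?mu xs) (sd xs))"
        by (intro prob_space_normal_density sdp)
      have "exp (-2) / sqrt (2*pi) \<le> measure (density lborel (normal_density (?mu xs) (sd xs))) {?mu xs + sd xs..}"
        by (rule tail_lower[OF sdp])
      also have "\<dots> \<le> measure (density lborel (normal_density (?mu xs) (sd xs))) {?fs..}"
        by (rule Q.finite_measure_mono[OF sub]) simp
      also have "\<dots> = Pr xs ?fs" using Pr_eq[OF xs(1)] v sqv[OF xs(1)] by (simp add: gauss_measure_def)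
      finally have 1: "exp (-2) / sqrt (2*pi) \<le> Pr xs ?fs" .
      have "p \<le> exp (-2) / sqrt (2*pi)"
      proof -
        have e: "exp (1::real) < 272/100" by (rule e_less_272)
        have "exp (2::real) = exp 1 * exp 1" by (simp flip: exp_add)
        also have "\<dots> \<le> (272/100) * (272/100)" using e by (intro mult_mono) auto
        finally have e2: "exp (2::real) \<le> 8" by simp
        have ee: "exp (2::real) = exp 1 * exp 1" by (simp flip: exp_add)
        have "exp 1 * sqrt 2 \<le> 4"
        proof -
          have "(exp 1 * sqrt 2)\<^sup>2 = exp 2 * 2" by (simp add: power_mult_distrib ee power2_eq_square)
          also have "\<dots> \<le> 4\<^sup>2" using e2 by simp
          finally show ?thesis by (rule power2_le_imp_le) simp
        qed
        then have m: "(exp 1 * sqrt 2) * (exp 1 * sqrt pi) \<le> 4 * (exp 1 * sqrt pi)"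
          by (rule mult_right_mono) simp
        have q: "exp 2 * sqrt (2*pi) = (exp 1 * sqrt 2) * (exp 1 * sqrt pi)"
          by (simp add: ee real_sqrt_mult mult_ac)
        have pos: "0 < exp 2 * sqrt (2*pi)" by simp
        have "1 / (4 * exp 1 * sqrt pi) \<le> 1 / (exp 2 * sqrt (2*pi))"
          by (rule divide_left_mono) (use m q pos in \<open>auto simp: mult_ac\<close>)
        also have "1 / (exp 2 * sqrt (2*pi)) = exp (-2) / sqrt (2*pi)"
          by (simp add: exp_minus divide_inverse)
        finally show ?thesis unfolding A(5) .
      qed
      with 1 show ?thesis by linarith
    qed
    have upp: "Pr x ?fs \<le> 1 / ?N" if xS: "x \<in> S" for x
    proof -
      have xX: "x \<in> X" using xS A(7) by auto
      have "\<Delta> x > c * ?sg x" using xS A(7) by auto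
      then have d: "?fs - f x > \<beta> * (1 + s) * ?sg x" using A(6) xs c_eq by simp
      have "f x - ?mu x \<ge> - sd x" using A(20) xX by (auto simp: sd_def abs_le_iff)
      moreover have "\<beta> * (1 + s) * ?sg x = sd x + s * sd x" by (simp add: sd_def algebra_simps)
      ultimately have gap: "?fs > ?mu x + s * sd x" using d by linarith
      show ?thesis
      proof (cases "sd x = 0")
        case True
        then have v0: "\<beta>\<^sup>2 * ?cv x x = 0" using sqv[OF xX] by simp
        have "Pr x ?fs = 0" using Pr_eq[OF xX, of ?fs] v0 gap True by (simp add: gauss_measure_def measure_return)
        then show ?thesis using N25 by simp
      next
        case False
        then have sdp: "sd x > 0" using sd_nn[OF xX] by simp
        then have v: "\<beta>\<^sup>2 * ?cv x x \<noteq> 0" using sqv[OF xX] by auto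
        have sub: "{?fs..} \<subseteq> {?mu x + s * sd x..}" using gap by auto
        interpret Q: prob_space "density lborel (normal_density (?mu x) (sd x))"
          by (intro prob_space_normal_density sdp)
        have "Pr x ?fs = measure (density lborel (normal_density (?mu x) (sd x))) {?fs..}"
          using Pr_eq[OF xX] v sqv[OF xX] by (simp add: gauss_measure_def)
        also have "\<dots> \<le> measure (density lborel (normal_density (?mu x) (sd x))) {?mu x + s * sd x..}"
          by (rule Q.finite_measure_mono[OF sub]) simp
        also have "\<dots> \<le> exp (-(s\<^sup>2)/2)" by (rule tail_upper[OF sdp s1])
        finally show ?thesis using expN by simp
      qed
    qed
    have SX: "S \<subseteq> X" using A(7) by auto
    let ?ES = "sel -` S \<inter> space M"
    have ES: "?ES \<in> P.events"
      using measurable_sets[OF A(22), of S] SX by simp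
    let ?Ac = "space M - (\<lambda>g. g xs) -` {?fs..} \<inter> space M"
    let ?B = "\<lambda>x. (\<lambda>g. g x) -` {?fs..} \<inter> space M"
    have cover: "?ES \<subseteq> ?Ac \<union> (\<Union>x\<in>S. ?B x)"
    proof
      fix g assume g: "g \<in> ?ES"
      show "g \<in> ?Ac \<union> (\<Union>x\<in>S. ?B x)"
      proof (cases "?fs \<le> g xs")
        case True
        have "g xs \<le> g (sel g)" using A(23) g xs(1) by auto
        then have "sel g \<in> S" "?fs \<le> g (sel g)" using g True by auto
        then show ?thesis using g by blast
      next
        case False then show ?thesis using g by auto
      qed
    qed
    have BS: "?B ` S \<subseteq> P.events" using ev SX by auto
    have finS: "finite S" using finite_subset[OF SX A(8)] .
    have UB: "(\<Union>x\<in>S. ?B x) \<in> P.events" using BS finS by (intro sets.finite_UN) auto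
    have Ac: "?Ac \<in> P.events" using ev[OF xs(1)] by auto
    have "measure M ?ES \<le> measure M (?Ac \<union> (\<Union>x\<in>S. ?B x))"
      by (rule P.finite_measure_mono[OF cover sets.Un[OF Ac UB]])
    also have "\<dots> \<le> measure M ?Ac + measure M (\<Union>x\<in>S. ?B x)"
      by (rule measure_Un_le[OF Ac UB])
    also have "measure M (\<Union>x\<in>S. ?B x) \<le> (\<Sum>x\<in>S. measure M (?B x))"
      using BS finS by (intro P.finite_measure_subadditive_finite) auto
    also have "(\<Sum>x\<in>S. measure M (?B x)) \<le> real (card S) * (1 / ?N)"
      using upp by (intro sum_bounded_above) (simp add: Pr_def)
    also have "measure M ?Ac = 1 - Pr xs ?fs" unfolding Pr_def
      using P.prob_compl[OF ev[OF xs(1)]] by simp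
    finally have m1: "measure M ?ES \<le> 1 - Pr xs ?fs + real (card S) * (1 / ?N)" by simp
    have "real (card S) * (1 / ?N) \<le> 1 / (real t)\<^sup>2"
    proof -
      have "card S \<le> card X" using card_mono[OF A(8) SX] .
      then have "real (card S) * (1 / ?N) \<le> real (card X) * (1 / ?N)" using N25
        by (intro mult_right_mono) auto
      also have "\<dots> = 1 / (real Budget * (real t)\<^sup>2)" using cX by (simp add: field_simps)
      also have "\<dots> \<le> 1 / (real t)\<^sup>2" using A(14,18)
        by (intro divide_left_mono) (auto intro!: mult_pos_pos)
      finally show ?thesis .
    qed
    then have m2: "measure M ?ES \<le> 1 - p + 1 / (real t)\<^sup>2" using m1 low by linarith
    have eqset: "{g \<in> space M. sel g \<in> X - S} = space M - ?ES" using A(23) by auto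
    have "measure M {g \<in> space M. sel g \<in> X - S} = 1 - measure M ?ES"
      unfolding eqset by (rule P.prob_compl[OF ES])
    then show ?thesis using m2 by linarith
  qed
qed

end
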